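(* Let $K$ be a hexagonal trefoil knot with vertices $v_1,\dots,v_6$ and let $\hat K$ be its quadrisecant approximation. If $\hat K$ has a new quadrisecant of type-1 or type-2, then this quadrisecant lies in at least one of the planes $P_1,\dots,P_6$.
   Context: A knot is a locally flat simple closed curve in $\mathbb R^3$; a polygonal knot is a union of finitely many straight segments, whose maximal segments are edges. A hexagonal trefoil knot is a polygonal knot with exactly six edges having the knot type of the trefoil. Label its vertices cyclically $v_1,\dots,v_6$ (indices mod 6), with edges $e_{i\,i+1}=\overline{v_iv_{i+1}}$, and let $P_i$ be the plane through $v_{i-1},v_i,v_{i+1}$. A quadrisecant of a knot or closed polygonal curve $C$ is a straight line $L$ such that $C\cap L$ has at least four connected components. The quadrisecant approximation $\hat K$ is obtained by marking all intersection points of $K$ with its (finitely many) quadrisecants and replacing each subarc of $K$ between consecutive marked points by the straight segment joining them. Each edge $e_{i\,i+1}$ contains exactly two marked points, and $\hat K$ has twelve edges: $O_i$, the segment of $e_{i\,i+1}$ between its two marked points, and $N_i$, the segment joining $O_{i-1}$ and $O_i$ (joining the marked point of $e_{i-1\,i}$ nearest $v_i$ to the marked point of $e_{i\,i+1}$ nearest $v_i$). A new quadrisecant of $\hat K$ is a quadrisecant of $\hat K$ that is not a quadrisecant of $K$. A quadrisecant $L$ of $\hat K$ is of type-$k$ if there are four distinct points of $L\cap\hat K$ lying on four distinct edges of $\hat K$ such that exactly $k$ pairs among these four edges are adjacent (share a vertex); a quadrisecant through vertices may have more than one type. *)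

theory Defs
  imports "HOL-Analysis.Analysis"
begin

definition ambient_isotopic :: "(real^3) set \<Rightarrow> (real^3) set \<Rightarrow> bool" where
  "ambient_isotopic A B \<longleftrightarrow>
     (\<exists>H :: (real, real^3) prod \<Rightarrow> real^3.
        continuous_on ({0..1} \<times> UNIV) H \<and>
        (\<forall>t\<in>{0..1}. \<exists>g. homeomorphism UNIV UNIV (\<lambda>x. H (t, x)) g) \<and>
        (\<forall>x. H (0, x) = x) \<and>
        (\<lambda>x. H (1, x)) ` A = B)"

definition std_trefoil :: "(real^3) set" where
  "std_trefoil = (\<lambda>t. vector [sin t + 2 * sin (2 * t), cos t - 2 * cos (2 * t), - sin (3 * t)])
                    ` {0..2 * pi}"

definition mirror3 :: "real^3 \<Rightarrow> real^3" where
  "mirror3 x = vector [x $ 1, x $ 2, - (x $ 3)]"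

definition is_trefoil :: "(real^3) set \<Rightarrow> bool" where
  "is_trefoil K \<longleftrightarrow> ambient_isotopic K std_trefoil \<or> ambient_isotopic K (mirror3 ` std_trefoil)"

definition edge6 :: "(nat \<Rightarrow> real^3) \<Rightarrow> nat \<Rightarrow> (real^3) set" where
  "edge6 v i = closed_segment (v (i mod 6)) (v (Suc i mod 6))"

definition polygon6 :: "(nat \<Rightarrow> real^3) \<Rightarrow> (real^3) set" where
  "polygon6 v = (\<Union>i<6. edge6 v i)"

text \<open>Simple closed hexagon whose six segments are maximal (consecutive vertices
never collinear), i.e. a polygonal knot with exactly six edges.\<close>
definition hexagonal_knot :: "(nat \<Rightarrow> real^3) \<Rightarrow> bool" where
  "hexagonal_knot v \<longleftrightarrow>
     (\<forall>i<6. \<not> collinear {v ((i + 5) mod 6), v i, v (Suc i mod 6)}) \<and>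
     (\<forall>i<6. edge6 v i \<inter> edge6 v (Suc i) = {v (Suc i mod 6)}) \<and>
     (\<forall>i<6. \<forall>j<6. i \<noteq> j \<and> j \<noteq> Suc i mod 6 \<and> i \<noteq> Suc j mod 6 \<longrightarrow>
                    edge6 v i \<inter> edge6 v j = {})"

definition hexagonal_trefoil :: "(nat \<Rightarrow> real^3) \<Rightarrow> bool" where
  "hexagonal_trefoil v \<longleftrightarrow> hexagonal_knot v \<and> is_trefoil (polygon6 v)"

definition plane6 :: "(nat \<Rightarrow> real^3) \<Rightarrow> nat \<Rightarrow> (real^3) set" where
  "plane6 v i = affine hull {v ((i + 5) mod 6), v i, v (Suc i mod 6)}"

definition is_line :: "(real^3) set \<Rightarrow> bool" where
  "is_line L \<longleftrightarrow> (\<exists>p d. d \<noteq> 0 \<and> L = range (\<lambda>t::real. p + t *\<^sub>R d))"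

definition quadrisecant :: "(real^3) set \<Rightarrow> (real^3) set \<Rightarrow> bool" where
  "quadrisecant C L \<longleftrightarrow> is_line L \<and> (\<exists>F. F \<subseteq> components (C \<inter> L) \<and> card F = 4)"

definition marked_points :: "(real^3) set \<Rightarrow> (real^3) set" where
  "marked_points K = K \<inter> \<Union>{L. quadrisecant K L}"

text \<open>a i, b i: the two marked points on edge e_{i,i+1}, a i nearest v i.
Vertices of the approximation in cyclic order: a 0, b 0, a 1, b 1, ..., a 5, b 5.
Edge 2i is O_i = [a i, b i], edge 2i+1 is N_(i+1) = [b i, a (i+1)].\<close>
definition qa_vertex :: "(nat \<Rightarrow> real^3) \<Rightarrow> (nat \<Rightarrow> real^3) \<Rightarrow> nat \<Rightarrow> real^3" where
  "qa_vertex a b j = (if even (j mod 12) then a ((j mod 12) div 2) else b ((j mod 12) div 2))"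

definition qa_edge :: "(nat \<Rightarrow> real^3) \<Rightarrow> (nat \<Rightarrow> real^3) \<Rightarrow> nat \<Rightarrow> (real^3) set" where
  "qa_edge a b j = closed_segment (qa_vertex a b j) (qa_vertex a b (Suc j))"

definition qa_approx :: "(nat \<Rightarrow> real^3) \<Rightarrow> (nat \<Rightarrow> real^3) \<Rightarrow> (real^3) set" where
  "qa_approx a b = (\<Union>j<12. qa_edge a b j)"

definition qa_adjacent :: "(nat \<Rightarrow> real^3) \<Rightarrow> (nat \<Rightarrow> real^3) \<Rightarrow> nat \<Rightarrow> nat \<Rightarrow> bool" where
  "qa_adjacent a b j j' \<longleftrightarrow>
     {qa_vertex a b j, qa_vertex a b (Suc j)} \<inter> {qa_vertex a b j', qa_vertex a b (Suc j')} \<noteq> {}"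

definition qa_type :: "nat \<Rightarrow> (nat \<Rightarrow> real^3) \<Rightarrow> (nat \<Rightarrow> real^3) \<Rightarrow> (real^3) set \<Rightarrow> bool" where
  "qa_type k a b L \<longleftrightarrow> quadrisecant (qa_approx a b) L \<and>
     (\<exists>J p. J \<subseteq> {..<12} \<and> card J = 4 \<and> inj_on p J \<and>
        (\<forall>j\<in>J. p j \<in> L \<inter> qa_edge a b j) \<and>
        card {{j, j'} | j j'. j \<in> J \<and> j' \<in> J \<and> j \<noteq> j' \<and> qa_adjacent a b j j'} = k)"

end

theory Submission
  imports Defs
begin

lemma seg_sub_affine:
  assumes "affine S" "x \<in> S" "y \<in> S" shows "closed_segment x y \<subseteq> S"
  by (meson affine_imp_convex assms closed_segment_subset)

lemma edge_plane1:
  assumes "i < 6" shows "edge6 v i \<subseteq> plane6 v i"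
proof -
  have "closed_segment (v i) (v (Suc i mod 6)) \<subseteq> plane6 v i"
    unfolding plane6_def
    by (rule seg_sub_affine) (simp_all add: hull_inc)
  thus ?thesis using assms by (simp add: edge6_def)
qed

lemma c6: "i < (6::nat) \<Longrightarrow> i = 0 \<or> i = 1 \<or> i = 2 \<or> i = 3 \<or> i = 4 \<or> i = 5" by arith
lemma c12: "j < (12::nat) \<Longrightarrow> j = 0 \<or> j = 1 \<or> j = 2 \<or> j = 3 \<or> j = 4 \<or> j = 5 \<or> j = 6 \<or> j = 7 \<or> j = 8 \<or> j = 9 \<or> j = 10 \<or> j = 11" by arith
lemma idx1: "i < (6::nat) \<Longrightarrow> (Suc i mod 6 + 5) mod 6 = i"
  by (drule c6) (elim disjE; simp)
lemma idx2: "j < (12::nat) \<Longrightarrow> even j \<Longrightarrow> Suc j mod 12 div 2 = j div 2"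
  by (drule c12) (elim disjE; simp)
lemma idx3: "j < (12::nat) \<Longrightarrow> odd j \<Longrightarrow> Suc j mod 12 div 2 = Suc (j div 2) mod 6"
  by (drule c12) (elim disjE; simp)

lemma edge_plane2:
  assumes "i < 6" shows "edge6 v i \<subseteq> plane6 v (Suc i mod 6)"
proof -
  have e: "(Suc i mod 6 + 5) mod 6 = i" using assms by (rule idx1)
  have "closed_segment (v i) (v (Suc i mod 6)) \<subseteq> plane6 v (Suc i mod 6)"
    unfolding plane6_def e
    by (rule seg_sub_affine) (simp_all add: hull_inc)
  thus ?thesis using assms by (simp add: edge6_def)
qed

lemma qv_edge:
  assumes A: "\<forall>i<6. a i \<in> edge6 v i \<and> b i \<in> edge6 v i" and "m < 12"
  shows "qa_vertex a b m \<in> edge6 v (m div 2)"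
proof -
  have m: "m mod 12 = m" "m div 2 < 6" using assms(2) by simp_all
  show ?thesis unfolding qa_vertex_def m(1) using A m(2) by simp
qed

lemma qedge_plane:
  assumes A: "\<forall>i<6. a i \<in> edge6 v i \<and> b i \<in> edge6 v i" and j: "j < 12"
  shows "qa_edge a b j \<subseteq> plane6 v (Suc (j div 2) mod 6)"
    and "even j \<Longrightarrow> qa_edge a b j \<subseteq> plane6 v (j div 2)"
proof -
  have sv: "qa_vertex a b (Suc j) = qa_vertex a b (Suc j mod 12)"
    by (simp add: qa_vertex_def)
  have v1: "qa_vertex a b j \<in> edge6 v (j div 2)" using qv_edge[OF A j] .
  have v2: "qa_vertex a b (Suc j) \<in> edge6 v (Suc j mod 12 div 2)"
    using qv_edge[OF A, of "Suc j mod 12"] sv by simp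
  have jd: "j div 2 < 6" using j by simp
  have aff: "\<And>s. affine (plane6 v s)" by (simp add: plane6_def)
  show "qa_edge a b j \<subseteq> plane6 v (Suc (j div 2) mod 6)"
  proof (cases "even j")
    case True
    then have "Suc j mod 12 div 2 = j div 2" using j idx2 by blast
    then show ?thesis unfolding qa_edge_def
      using v1 v2 edge_plane2[OF jd, of v] by (intro seg_sub_affine[OF aff]) auto
  next
    case False
    then have "Suc j mod 12 div 2 = Suc (j div 2) mod 6" using j idx3 by blast
    moreover have "Suc (j div 2) mod 6 < 6" by simp
    ultimately show ?thesis unfolding qa_edge_def
      using v1 v2 edge_plane2[OF jd, of v] edge_plane1[of "Suc (j div 2) mod 6" v]
      by (intro seg_sub_affine[OF aff]) auto
  qed
  show "even j \<Longrightarrow> qa_edge a b j \<subseteq> plane6 v (j div 2)"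
  proof -
    assume ev: "even j"
    then have "Suc j mod 12 div 2 = j div 2" using j idx2 by blast
    then show ?thesis unfolding qa_edge_def
      using v1 v2 edge_plane1[OF jd, of v] by (intro seg_sub_affine[OF aff]) auto
  qed
qed

lemma line_in_affine:
  assumes "is_line L" "x \<in> L" "y \<in> L" "x \<noteq> y" "affine S" "x \<in> S" "y \<in> S"
  shows "L \<subseteq> S"
proof
  fix z assume z: "z \<in> L"
  obtain p d where L: "L = range (\<lambda>t::real. p + t *\<^sub>R d)" using assms(1) is_line_def by auto
  obtain s u t where xs: "x = p + s *\<^sub>R d" and yu: "y = p + u *\<^sub>R d" and zt: "z = p + t *\<^sub>R d"
    using assms(2,3) z L by auto
  have su: "u - s \<noteq> 0" using assms(4) xs yu by auto
  define l where "l = (t - s) / (u - s)"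
  have "(1 - l) *\<^sub>R x + l *\<^sub>R y = p + (s + l * (u - s)) *\<^sub>R d"
    unfolding xs yu by (simp add: algebra_simps)
  also have "s + l * (u - s) = t" using su by (simp add: l_def)
  finally have "z = (1 - l) *\<^sub>R x + l *\<^sub>R y" using zt by simp
  thus "z \<in> S" using assms(5-7) unfolding affine_def by auto
qed


lemma ar1: "m < (12::nat) \<Longrightarrow> m' < 12 \<Longrightarrow> odd m \<Longrightarrow> even m' \<Longrightarrow> m' div 2 = Suc (m div 2) mod 6 \<Longrightarrow> m' = Suc m mod 12"
  apply (subgoal_tac "m' = 2 * (m' div 2)")
   apply (drule c12) apply (elim disjE; simp)
  by (metis even_two_times_div_two)
lemma comb: "j < (12::nat) \<Longrightarrow> j' < 12 \<Longrightarrow> m = j \<or> m = Suc j mod 12 \<Longrightarrow> m' = j' \<or> m' = Suc j' mod 12 \<Longrightarrow>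
  m = m' \<or> (odd m \<and> m' = Suc m mod 12) \<or> (odd m' \<and> m = Suc m' mod 12) \<Longrightarrow>
  (Suc (j div 2) mod 6 = Suc (j' div 2) mod 6) \<or> (even j \<and> j div 2 = Suc (j' div 2) mod 6) \<or>
  (even j' \<and> j' div 2 = Suc (j div 2) mod 6) \<or> (even j \<and> even j' \<and> j div 2 = j' div 2)"
  apply (drule c12, drule c12)
  apply (elim disjE; simp; elim disjE; simp)
  done

lemma edge6_Suc_mod: "edge6 v (Suc i mod 6) = edge6 v (Suc i)"
  by (simp add: edge6_def mod_Suc_eq)

lemma C0:
  assumes hk: "hexagonal_knot v"
    and A: "\<forall>i<6. a i \<in> edge6 v i \<and> b i \<in> edge6 v i \<and> a i \<noteq> b i \<and> dist (v i) (a i) < dist (v i) (b i)"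
    and m: "m < 12" "m' < 12" and eq: "qa_vertex a b m = qa_vertex a b m'"
    and nb: "m' div 2 = Suc (m div 2) mod 6"
  shows "odd m \<and> m' = Suc m mod 12"
proof -
  have A': "\<forall>i<6. a i \<in> edge6 v i \<and> b i \<in> edge6 v i" using A by blast
  define i where "i = m div 2"
  have i: "i < 6" using m(1) by (simp add: i_def)
  define x where "x = qa_vertex a b m"
  have x1: "x \<in> edge6 v i" using qv_edge[OF A' m(1)] by (simp add: x_def i_def)
  have "x \<in> edge6 v (Suc i mod 6)" using qv_edge[OF A' m(2)] eq nb by (simp add: x_def i_def)
  hence x2: "x \<in> edge6 v (Suc i)" by (simp add: edge6_Suc_mod)
  have "edge6 v i \<inter> edge6 v (Suc i) = {v (Suc i mod 6)}"
    using hk i unfolding hexagonal_knot_def by blast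
  hence xv: "x = v (Suc i mod 6)" using x1 x2 by blast
  have qm: "qa_vertex a b m = (if even m then a i else b i)"
    using m(1) by (simp add: qa_vertex_def i_def)
  have odm: "odd m"
  proof
    assume ev: "even m"
    hence "a i = v (Suc i mod 6)" using qm xv by (simp add: x_def)
    moreover have "b i \<in> closed_segment (v i) (v (Suc i mod 6))"
      using A i by (simp add: edge6_def)
    hence "dist (b i) (v i) \<le> dist (v i) (v (Suc i mod 6))"
      using dist_in_closed_segment by blast
    moreover have "dist (v i) (a i) < dist (v i) (b i)" using A i by blast
    ultimately show False by (simp add: dist_commute)
  qed
  define i' where "i' = m' div 2"
  have i': "i' < 6" using m(2) by (simp add: i'_def)
  have qm': "qa_vertex a b m' = (if even m' then a i' else b i')"
    using m(2) by (simp add: qa_vertex_def i'_def)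
  have evm': "even m'"
  proof (rule ccontr)
    assume od: "odd m'"
    hence "b i' = v i'" using qm' xv eq nb by (simp add: x_def i_def i'_def)
    thus False using A i' by force
  qed
  show ?thesis using odm evm' ar1 m nb by blast
qed

lemma C1:
  assumes hk: "hexagonal_knot v"
    and A: "\<forall>i<6. a i \<in> edge6 v i \<and> b i \<in> edge6 v i \<and> a i \<noteq> b i \<and> dist (v i) (a i) < dist (v i) (b i)"
    and m: "m < 12" "m' < 12" "m \<noteq> m'" and eq: "qa_vertex a b m = qa_vertex a b m'"
  shows "(odd m \<and> m' = Suc m mod 12) \<or> (odd m' \<and> m = Suc m' mod 12)"
proof -
  have A': "\<forall>i<6. a i \<in> edge6 v i \<and> b i \<in> edge6 v i" using A by blast
  define i where "i = m div 2"
  define i' where "i' = m' div 2"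
  have i: "i < 6" "i' < 6" using m by (simp_all add: i_def i'_def)
  have qm: "qa_vertex a b m = (if even m then a i else b i)"
    using m(1) by (simp add: qa_vertex_def i_def)
  have qm': "qa_vertex a b m' = (if even m' then a i' else b i')"
    using m(2) by (simp add: qa_vertex_def i'_def)
  have x1: "qa_vertex a b m \<in> edge6 v i" using qv_edge[OF A' m(1)] by (simp add: i_def)
  have x2: "qa_vertex a b m \<in> edge6 v i'" using qv_edge[OF A' m(2)] eq by (simp add: i'_def)
  consider "i = i'" | "i' = Suc i mod 6" | "i = Suc i' mod 6"
    | "i \<noteq> i'" "i' \<noteq> Suc i mod 6" "i \<noteq> Suc i' mod 6" by blast
  then show ?thesis
  proof cases
    case 1
    have "m = 2 * i + (if even m then 0 else 1)" "m' = 2 * i' + (if even m' then 0 else 1)"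
      by (simp_all add: i_def i'_def)
    hence "even m \<noteq> even m'" using m(3) 1 by (auto split: if_splits)
    hence "a i = b i" using eq qm qm' 1 by (auto split: if_splits)
    thus ?thesis using A i by blast
  next
    case 2 thus ?thesis using C0[OF hk A m(1,2) eq] by (simp add: i_def i'_def)
  next
    case 3 thus ?thesis using C0[OF hk A m(2,1) eq[symmetric]] by (simp add: i_def i'_def)
  next
    case 4
    have "edge6 v i \<inter> edge6 v i' = {}"
      using hk i 4 unfolding hexagonal_knot_def by blast
    thus ?thesis using x1 x2 by blast
  qed
qed

lemma ADJ:
  assumes hk: "hexagonal_knot v"
    and A: "\<forall>i<6. a i \<in> edge6 v i \<and> b i \<in> edge6 v i \<and> a i \<noteq> b i \<and> dist (v i) (a i) < dist (v i) (b i)"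
    and j: "j < 12" "j' < 12" and adj: "qa_adjacent a b j j'"
  shows "\<exists>s<6. qa_edge a b j \<subseteq> plane6 v s \<and> qa_edge a b j' \<subseteq> plane6 v s"
proof -
  have A': "\<forall>i<6. a i \<in> edge6 v i \<and> b i \<in> edge6 v i" using A by blast
  have sv: "\<And>n. qa_vertex a b (Suc n) = qa_vertex a b (Suc n mod 12)"
    by (simp add: qa_vertex_def)
  obtain m m' where mm: "m = j \<or> m = Suc j mod 12" "m' = j' \<or> m' = Suc j' mod 12"
    and eq: "qa_vertex a b m = qa_vertex a b m'"
    using adj unfolding qa_adjacent_def sv by blast
  have ml: "m < 12" "m' < 12" using mm j by auto
  have "m = m' \<or> (odd m \<and> m' = Suc m mod 12) \<or> (odd m' \<and> m = Suc m' mod 12)"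
    using C1[OF hk A ml _ eq] by blast
  note cb = comb[OF j mm this]
  note P1 = qedge_plane[OF A' j(1)] and P2 = qedge_plane[OF A' j(2)]
  have l1: "Suc (j div 2) mod 6 < 6" "Suc (j' div 2) mod 6 < 6" by simp_all
  have l2: "j div 2 < 6" "j' div 2 < 6" using j by simp_all
  from cb show ?thesis
  proof (elim disjE conjE)
    assume h: "Suc (j div 2) mod 6 = Suc (j' div 2) mod 6"
    show ?thesis using P1(1) P2(1) l1 h by metis
  next
    assume h: "even j" "j div 2 = Suc (j' div 2) mod 6"
    show ?thesis using P1(2)[OF h(1)] P2(1) l1 h(2) by metis
  next
    assume h: "even j'" "j' div 2 = Suc (j div 2) mod 6"
    show ?thesis using P2(2)[OF h(1)] P1(1) l1 h(2) by metis
  next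
    assume h: "even j" "even j'" "j div 2 = j' div 2"
    show ?thesis using P1(2)[OF h(1)] P2(2)[OF h(2)] l2 h(3) by metis
  qed
qed

theorem lemma8:
  fixes v a b :: "nat \<Rightarrow> real^3" and L :: "(real^3) set"
  assumes "hexagonal_trefoil v"
    and "\<forall>i<6. marked_points (polygon6 v) \<inter> edge6 v i = {a i, b i} \<and> a i \<noteq> b i \<and>
               dist (v i) (a i) < dist (v i) (b i)"
    and "quadrisecant (qa_approx a b) L"
    and "\<not> quadrisecant (polygon6 v) L"
    and "qa_type 1 a b L \<or> qa_type 2 a b L"
  shows "\<exists>i<6. L \<subseteq> plane6 v i"
proof -
  have hk: "hexagonal_knot v" using assms(1) by (simp add: hexagonal_trefoil_def)
  have A: "\<forall>i<6. a i \<in> edge6 v i \<and> b i \<in> edge6 v i \<and> a i \<noteq> b i \<and> dist (v i) (a i) < dist (v i) (b i)"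
  proof (intro allI impI)
    fix i :: nat assume "i < 6"
    with assms(2) have "marked_points (polygon6 v) \<inter> edge6 v i = {a i, b i}" "a i \<noteq> b i"
       "dist (v i) (a i) < dist (v i) (b i)" by auto
    thus "a i \<in> edge6 v i \<and> b i \<in> edge6 v i \<and> a i \<noteq> b i \<and> dist (v i) (a i) < dist (v i) (b i)"
      by blast
  qed
  have line: "is_line L" using assms(3) by (simp add: quadrisecant_def)
  obtain k where k: "k = 1 \<or> k = 2" "qa_type k a b L" using assms(5) by blast
  then obtain J p where J: "J \<subseteq> {..<12}" "inj_on p J" "\<forall>j\<in>J. p j \<in> L \<inter> qa_edge a b j"
    and c: "card {{j, j'} | j j'. j \<in> J \<and> j' \<in> J \<and> j \<noteq> j' \<and> qa_adjacent a b j j'} = k"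
    unfolding qa_type_def by blast
  have "card {{j, j'} | j j'. j \<in> J \<and> j' \<in> J \<and> j \<noteq> j' \<and> qa_adjacent a b j j'} \<noteq> 0"
    using c k(1) by auto
  hence "{{j, j'} | j j'. j \<in> J \<and> j' \<in> J \<and> j \<noteq> j' \<and> qa_adjacent a b j j'} \<noteq> {}"
    by (metis card.empty)
  then obtain j j' where jj: "j \<in> J" "j' \<in> J" "j \<noteq> j'" "qa_adjacent a b j j'" by blast
  have jl: "j < 12" "j' < 12" using J(1) jj by auto
  obtain s where s6: "s < 6" and s: "qa_edge a b j \<subseteq> plane6 v s" "qa_edge a b j' \<subseteq> plane6 v s"
    using ADJ[OF hk A jl jj(4)] by blast
  have pne: "p j \<noteq> p j'" using J(2) jj inj_on_def by metis
  have "L \<subseteq> plane6 v s"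
    using line_in_affine[OF line _ _ pne, of "plane6 v s"] J(3) jj s
    by (auto simp: plane6_def)
  thus ?thesis using s6 by blast
qed

end
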